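(* Let $\mathcal K$ and $\mathcal K_\sigma$ be weighted simplicial complexes on a finite vertex set such that $\mathcal K_\sigma=\mathcal K\cup\{\sigma\}$, where $\sigma\notin\mathcal K$ is a $k$-simplex, the weight function $w$ of $\mathcal K_\sigma$ restricts to that of $\mathcal K$, and $w$ is injective on $k$-faces. Denote labels in $\mathcal K$ by $\ell$ and in $\mathcal K_\sigma$ by $\ell_\sigma$, and let $\mathrm{MSA}(\cdot)$ denote the (unique) minimal $k$-spanning acycle. Then: (i) $|\mathrm{MSA}(\mathcal K_\sigma)\setminus\mathrm{MSA}(\mathcal K)|\le 1$ and $|\mathrm{MSA}(\mathcal K)\setminus\mathrm{MSA}(\mathcal K_\sigma)|\le 1$; equivalently $\sum_{\tau\in\mathcal K}\mathbf 1(\ell(\tau)\ne\ell_\sigma(\tau))\le 1$. (ii) If $\ell_\sigma(\sigma)=1$, then $\mathrm{MSA}(\mathcal K)=\mathrm{MSA}(\mathcal K_\sigma)$, and hence $\mathbf M^\phi(\mathcal K)=\mathbf M^\phi(\mathcal K_\sigma)$ for every strictly increasing $\phi:\mathbb{R}_+\to\mathbb{R}_+$.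
   Context: A weighted complex is a simplicial complex $\mathcal K$ with a monotone weight $w:\mathcal K\to\mathbb{R}$ (every sublevel set $\{\tau:w(\tau)\le t\}$ is a subcomplex). For a simplex $\tau$, $\mathcal K(\tau^-)=\{\rho\in\mathcal K:w(\rho)<w(\tau)\}$. Homology is over a field. A $j$-simplex $\tau$ has label $\ell(\tau)=1$ (positive) if $\partial\tau\in\partial C_j(\mathcal K(\tau^-))$ (adding $\tau$ to $\mathcal K(\tau^-)$ creates a new $j$-cycle) and $\ell(\tau)=-1$ (negative) otherwise. A set $S$ of $k$-faces is a $k$-spanning acycle if $\beta_{k-1}(\mathcal K_{k-1}\cup S)=\beta_{k-1}(\mathcal K)$ and $\beta_k(\mathcal K_{k-1}\cup S)=0$ (reduced Betti numbers, $\mathcal K_{k-1}$ the $(k-1)$-skeleton); the minimal $k$-spanning acycle $\mathrm{MSA}(\mathcal K)$ minimizes $\sum_{\tau\in S}w(\tau)$. $\mathbf M^\phi(\mathcal K)=\sum_{\tau\in\mathrm{MSA}(\mathcal K)}\phi(w(\tau))$. *)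

theory Defs
  imports Complex_Main "HOL-Library.Function_Algebras"
begin

text \<open>Simplices are finite sets of vertices (vertex type linearly ordered, giving the
  orientation).  For chains we additionally use the empty simplex as the unique
  (-1)-simplex, so that the homology computed is reduced homology (augmented complex).\<close>

definition weighted_complex :: "'a set set \<Rightarrow> ('a set \<Rightarrow> real) \<Rightarrow> bool" where
  "weighted_complex K w \<longleftrightarrow> finite K \<and>
     (\<forall>\<tau>\<in>K. finite \<tau> \<and> \<tau> \<noteq> {}) \<and>
     (\<forall>\<tau>\<in>K. \<forall>\<rho>. \<rho> \<subseteq> \<tau> \<and> \<rho> \<noteq> {} \<longrightarrow> \<rho> \<in> K) \<and>
     (\<forall>\<tau>\<in>K. \<forall>\<rho>\<in>K. \<rho> \<subseteq> \<tau> \<longrightarrow> w \<rho> \<le> w \<tau>)"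

definition faces :: "int \<Rightarrow> 'a set set \<Rightarrow> 'a set set" where
  "faces j L = {\<tau> \<in> insert {} L. int (card \<tau>) = j + 1}"

definition bd :: "'a::linorder set \<Rightarrow> ('a set \<Rightarrow> 'f::field)" where
  "bd \<tau> = (\<lambda>\<rho>. if \<rho> \<subseteq> \<tau> \<and> card \<rho> + 1 = card \<tau>
              then (- 1) ^ card {x \<in> \<tau>. x < the_elem (\<tau> - \<rho>)} else 0)"

definition scl :: "'f::field \<Rightarrow> ('a set \<Rightarrow> 'f) \<Rightarrow> ('a set \<Rightarrow> 'f)" where
  "scl c f = (\<lambda>x. c * f x)"

definition chains :: "int \<Rightarrow> 'a set set \<Rightarrow> ('a set \<Rightarrow> 'f::field) set" where
  "chains j L = {c. \<forall>\<tau>. \<tau> \<notin> faces j L \<longrightarrow> c \<tau> = 0}"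

definition bd_chain :: "int \<Rightarrow> 'a set set \<Rightarrow> ('a::linorder set \<Rightarrow> 'f::field) \<Rightarrow> ('a set \<Rightarrow> 'f)" where
  "bd_chain j L c = (\<lambda>\<rho>. \<Sum>\<tau>\<in>faces j L. c \<tau> * bd \<tau> \<rho>)"

definition betti :: "'f::field itself \<Rightarrow> int \<Rightarrow> 'a::linorder set set \<Rightarrow> int" where
  "betti F j L =
     int (vector_space.dim (scl :: 'f \<Rightarrow> _)
            {c \<in> chains j L. bd_chain j L c = (0 :: 'a set \<Rightarrow> 'f)})
   - int (vector_space.dim (scl :: 'f \<Rightarrow> _)
            (bd_chain (j + 1) L ` (chains (j + 1) L :: ('a set \<Rightarrow> 'f) set)))"

definition label :: "'f::field itself \<Rightarrow> 'a::linorder set set \<Rightarrow> ('a set \<Rightarrow> real) \<Rightarrow> 'a set \<Rightarrow> int" where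
  "label F L w \<tau> =
     (let j = int (card \<tau>) - 1; Lm = {\<rho> \<in> L. w \<rho> < w \<tau>} in
      if (bd \<tau> :: 'a set \<Rightarrow> 'f) \<in> bd_chain j Lm ` chains j Lm then 1 else -1)"

definition skeleton :: "int \<Rightarrow> 'a set set \<Rightarrow> 'a set set" where
  "skeleton j L = {\<tau> \<in> L. int (card \<tau>) \<le> j + 1}"

definition spanning_acycle :: "'f::field itself \<Rightarrow> nat \<Rightarrow> 'a::linorder set set \<Rightarrow> 'a set set \<Rightarrow> bool" where
  "spanning_acycle F k L S \<longleftrightarrow> S \<subseteq> {\<tau> \<in> L. card \<tau> = k + 1} \<and>
     betti F (int k - 1) (skeleton (int k - 1) L \<union> S) = betti F (int k - 1) L \<and>
     betti F (int k) (skeleton (int k - 1) L \<union> S) = 0"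

definition min_spanning_acycle :: "'f::field itself \<Rightarrow> nat \<Rightarrow> 'a::linorder set set \<Rightarrow> ('a set \<Rightarrow> real) \<Rightarrow> 'a set set \<Rightarrow> bool" where
  "min_spanning_acycle F k L w S \<longleftrightarrow> spanning_acycle F k L S \<and>
     (\<forall>S'. spanning_acycle F k L S' \<longrightarrow> (\<Sum>\<tau>\<in>S. w \<tau>) \<le> (\<Sum>\<tau>\<in>S'. w \<tau>))"

text \<open>The (unique, under injectivity of w on k-faces) minimal k-spanning acycle.\<close>
definition MSA :: "'f::field itself \<Rightarrow> nat \<Rightarrow> 'a::linorder set set \<Rightarrow> ('a set \<Rightarrow> real) \<Rightarrow> 'a set set" where
  "MSA F k L w = (THE S. min_spanning_acycle F k L w S)"

definition Mphi :: "'f::field itself \<Rightarrow> (real \<Rightarrow> real) \<Rightarrow> nat \<Rightarrow> 'a::linorder set set \<Rightarrow> ('a set \<Rightarrow> real) \<Rightarrow> real" where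
  "Mphi F \<phi> k L w = (\<Sum>\<tau>\<in>MSA F k L w. \<phi> (w \<tau>))"

end

theory Submission
  imports Defs
begin

definition indepF :: "('k::field \<Rightarrow> 'b::ab_group_add \<Rightarrow> 'b) \<Rightarrow> ('e \<Rightarrow> 'b) \<Rightarrow> 'e set \<Rightarrow> bool" where
 "indepF sc v S \<longleftrightarrow> (\<forall>c. (\<Sum>\<tau>\<in>S. sc (c \<tau>) (v \<tau>)) = 0 \<longrightarrow> (\<forall>\<tau>\<in>S. c \<tau> = 0))"

definition SA :: "('k::field \<Rightarrow> 'b::ab_group_add \<Rightarrow> 'b) \<Rightarrow> ('e \<Rightarrow> 'b) \<Rightarrow> 'e set \<Rightarrow> 'e set \<Rightarrow> bool" where
 "SA sc v E S \<longleftrightarrow> S \<subseteq> E \<and> indepF sc v S \<and> module.span sc (v ` S) = module.span sc (v ` E)"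

definition Gr :: "('k::field \<Rightarrow> 'b::ab_group_add \<Rightarrow> 'b) \<Rightarrow> ('e \<Rightarrow> 'b) \<Rightarrow> 'e set \<Rightarrow> ('e \<Rightarrow> real) \<Rightarrow> 'e set" where
 "Gr sc v E w = {\<tau>\<in>E. v \<tau> \<notin> module.span sc (v ` {\<rho>\<in>E. w \<rho> < w \<tau>})}"

context vector_space begin

lemma span_fam:
  assumes "finite A"
  shows "x \<in> span (v ` A) \<longleftrightarrow> (\<exists>c. x = (\<Sum>\<tau>\<in>A. c \<tau> *s v \<tau>))"
proof
  assume "\<exists>c. x = (\<Sum>\<tau>\<in>A. c \<tau> *s v \<tau>)"
  then obtain c where x: "x = (\<Sum>\<tau>\<in>A. c \<tau> *s v \<tau>)" by blast
  have "\<And>\<tau>. \<tau> \<in> A \<Longrightarrow> c \<tau> *s v \<tau> \<in> span (v ` A)" by (rule span_scale, rule span_base) simp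
  then show "x \<in> span (v ` A)" unfolding x by (rule span_sum)
next
  let ?R = "{y. \<exists>c. y = (\<Sum>\<tau>\<in>A. c \<tau> *s v \<tau>)}"
  have sub: "subspace ?R"
    unfolding subspace_def
  proof (intro conjI ballI allI)
    show "0 \<in> ?R" by (rule CollectI, rule exI[of _ "\<lambda>_. 0"]) simp
    fix y z assume "y \<in> ?R" "z \<in> ?R"
    then obtain c d where "y = (\<Sum>\<tau>\<in>A. c \<tau> *s v \<tau>)" "z = (\<Sum>\<tau>\<in>A. d \<tau> *s v \<tau>)" by auto
    then show "y + z \<in> ?R"
      by (auto intro!: exI[of _ "\<lambda>\<tau>. c \<tau> + d \<tau>"] simp: scale_left_distrib sum.distrib)
  next
    fix a y assume "y \<in> ?R"
    then obtain c where "y = (\<Sum>\<tau>\<in>A. c \<tau> *s v \<tau>)" by auto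
    then show "a *s y \<in> ?R" by (auto intro!: exI[of _ "\<lambda>\<tau>. a * c \<tau>"] simp: scale_sum_right)
  qed
  have "v ` A \<subseteq> ?R"
  proof
    fix y assume "y \<in> v ` A"
    then obtain \<tau> where \<tau>: "\<tau> \<in> A" "y = v \<tau>" by auto
    have "(\<Sum>\<rho>\<in>A. (if \<rho> = \<tau> then 1 else 0) *s v \<rho>) = (\<Sum>\<rho>\<in>A. if \<rho> = \<tau> then v \<rho> else 0)"
      by (rule sum.cong) auto
    also have "\<dots> = v \<tau>" using \<tau> assms by (simp add: sum.delta')
    finally show "y \<in> ?R" using \<tau> by (auto intro!: exI[of _ "\<lambda>\<rho>. if \<rho> = \<tau> then 1 else 0"])
  qed
  then have "span (v ` A) \<subseteq> ?R" by (rule span_minimal[OF _ sub])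
  moreover assume "x \<in> span (v ` A)"
  ultimately show "\<exists>c. x = (\<Sum>\<tau>\<in>A. c \<tau> *s v \<tau>)" by auto
qed

lemma span_fam_sub:
  assumes "B \<subseteq> A"
  shows "(\<Sum>\<tau>\<in>B. c \<tau> *s v \<tau>) \<in> span (v ` A)"
proof -
  have "\<And>\<tau>. \<tau> \<in> B \<Longrightarrow> c \<tau> *s v \<tau> \<in> span (v ` A)" by (rule span_scale, rule span_base) (use assms in auto)
  then show ?thesis by (rule span_sum)
qed

lemma indepF_not_span:
  assumes "finite S" "indepF scale v S" "\<tau> \<in> S"
  shows "v \<tau> \<notin> span (v ` (S - {\<tau>}))"
proof
  assume "v \<tau> \<in> span (v ` (S - {\<tau>}))"
  then obtain c where c: "v \<tau> = (\<Sum>\<rho>\<in>S - {\<tau>}. c \<rho> *s v \<rho>)"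
    using span_fam[of "S - {\<tau>}"] assms(1) by auto
  define d where "d = c(\<tau> := -1)"
  have "(\<Sum>\<rho>\<in>S. d \<rho> *s v \<rho>) = d \<tau> *s v \<tau> + (\<Sum>\<rho>\<in>S - {\<tau>}. d \<rho> *s v \<rho>)"
    using assms by (simp add: sum.remove)
  also have "(\<Sum>\<rho>\<in>S - {\<tau>}. d \<rho> *s v \<rho>) = (\<Sum>\<rho>\<in>S - {\<tau>}. c \<rho> *s v \<rho>)"
    by (rule sum.cong) (auto simp: d_def)
  finally have "(\<Sum>\<rho>\<in>S. d \<rho> *s v \<rho>) = 0" using c by (simp add: d_def)
  with assms(2,3) have "d \<tau> = 0" unfolding indepF_def by blast
  then show False by (simp add: d_def)
qed

lemma Gr_indep:
  assumes "finite E" "inj_on w E"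
  shows "indepF scale v (Gr scale v E w)"
  unfolding indepF_def
proof (intro allI impI ballI, rule ccontr)
  fix c \<tau>1 assume sum0: "(\<Sum>\<tau>\<in>Gr scale v E w. c \<tau> *s v \<tau>) = 0" and t1: "\<tau>1 \<in> Gr scale v E w" "c \<tau>1 \<noteq> 0"
  let ?G = "Gr scale v E w"
  define N where "N = {\<tau>\<in>?G. c \<tau> \<noteq> 0}"
  have fin: "finite ?G" using assms by (simp add: Gr_def)
  have NE: "N \<noteq> {}" "finite N" using t1 fin by (auto simp: N_def)
  obtain \<tau>0 where \<tau>0: "\<tau>0 \<in> N" "w \<tau>0 = Max (w ` N)"
  proof -
    have "Max (w ` N) \<in> w ` N" using NE by simp
    then show ?thesis using that by auto
  qed
  have mx: "\<forall>x\<in>N. w x \<le> w \<tau>0" using \<tau>0 NE by auto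
  have "(\<Sum>\<tau>\<in>?G. c \<tau> *s v \<tau>) = (\<Sum>\<tau>\<in>N. c \<tau> *s v \<tau>)"
    by (rule sum.mono_neutral_right) (auto simp: N_def fin)
  also have "\<dots> = c \<tau>0 *s v \<tau>0 + (\<Sum>\<tau>\<in>N-{\<tau>0}. c \<tau> *s v \<tau>)" using NE \<tau>0 by (simp add: sum.remove)
  finally have eq: "c \<tau>0 *s v \<tau>0 = - (\<Sum>\<tau>\<in>N-{\<tau>0}. c \<tau> *s v \<tau>)" using sum0
    by (simp add: eq_neg_iff_add_eq_0)
  have sub: "N - {\<tau>0} \<subseteq> {\<rho>\<in>E. w \<rho> < w \<tau>0}"
  proof
    fix x assume x: "x \<in> N - {\<tau>0}"
    then have "x \<in> E" "\<tau>0 \<in> E" using \<tau>0 by (auto simp: N_def Gr_def)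
    then have "w x \<noteq> w \<tau>0" using x assms(2) by (auto dest: inj_onD)
    with mx x \<open>x \<in> E\<close> show "x \<in> {\<rho>\<in>E. w \<rho> < w \<tau>0}" by force
  qed
  have "(\<Sum>\<tau>\<in>N-{\<tau>0}. c \<tau> *s v \<tau>) \<in> span (v ` {\<rho>\<in>E. w \<rho> < w \<tau>0})"
    using sub by (intro span_fam_sub) auto
  then have "(1 / c \<tau>0) *s (c \<tau>0 *s v \<tau>0) \<in> span (v ` {\<rho>\<in>E. w \<rho> < w \<tau>0})"
    unfolding eq by (intro span_scale span_neg)
  then have "v \<tau>0 \<in> span (v ` {\<rho>\<in>E. w \<rho> < w \<tau>0})" using \<tau>0 by (simp add: N_def)
  then show False using \<tau>0 by (simp add: N_def Gr_def)
qed

lemma Gr_span: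
  assumes "finite E"
  shows "\<tau> \<in> E \<Longrightarrow> v \<tau> \<in> span (v ` {g \<in> Gr scale v E w. w g \<le> w \<tau>})"
proof (induction "card {\<rho>\<in>E. w \<rho> < w \<tau>}" arbitrary: \<tau> rule: less_induct)
  case less
  show ?case
  proof (cases "\<tau> \<in> Gr scale v E w")
    case True then show ?thesis by (auto intro: span_base)
  next
    case False
    with less.prems have inl: "v \<tau> \<in> span (v ` {\<rho>\<in>E. w \<rho> < w \<tau>})" by (simp add: Gr_def)
    have "v ` {\<rho>\<in>E. w \<rho> < w \<tau>} \<subseteq> span (v ` {g\<in>Gr scale v E w. w g \<le> w \<tau>})"
    proof
      fix y assume "y \<in> v ` {\<rho>\<in>E. w \<rho> < w \<tau>}"
      then obtain \<rho> where \<rho>: "\<rho> \<in> E" "w \<rho> < w \<tau>" "y = v \<rho>" by auto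
      have "card {x\<in>E. w x < w \<rho>} < card {x\<in>E. w x < w \<tau>}"
        by (rule psubset_card_mono) (use \<rho> assms in auto)
      then have "v \<rho> \<in> span (v ` {g\<in>Gr scale v E w. w g \<le> w \<rho>})" using less.hyps \<rho>(1) by blast
      also have "span (v ` {g\<in>Gr scale v E w. w g \<le> w \<rho>}) \<subseteq> span (v ` {g\<in>Gr scale v E w. w g \<le> w \<tau>})"
        by (rule span_mono) (use \<rho> in auto)
      finally show "y \<in> span (v ` {g\<in>Gr scale v E w. w g \<le> w \<tau>})" using \<rho> by simp
    qed
    then have "span (v ` {\<rho>\<in>E. w \<rho> < w \<tau>}) \<subseteq> span (v ` {g\<in>Gr scale v E w. w g \<le> w \<tau>})"
      by (rule span_minimal) simp
    with inl show ?thesis by auto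
  qed
qed

lemma Gr_lower:
  assumes "finite E" "\<tau> \<in> E" "\<tau> \<notin> Gr scale v E w"
  shows "v \<tau> \<in> span (v ` {g \<in> Gr scale v E w. w g < w \<tau>})"
proof -
  have inl: "v \<tau> \<in> span (v ` {\<rho>\<in>E. w \<rho> < w \<tau>})" using assms by (simp add: Gr_def)
  have "v ` {\<rho>\<in>E. w \<rho> < w \<tau>} \<subseteq> span (v ` {g\<in>Gr scale v E w. w g < w \<tau>})"
  proof
    fix y assume "y \<in> v ` {\<rho>\<in>E. w \<rho> < w \<tau>}"
    then obtain \<rho> where \<rho>: "\<rho> \<in> E" "w \<rho> < w \<tau>" "y = v \<rho>" by auto
    have "v \<rho> \<in> span (v ` {g\<in>Gr scale v E w. w g \<le> w \<rho>})" using Gr_span[OF assms(1) \<rho>(1)] .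
    also have "span (v ` {g\<in>Gr scale v E w. w g \<le> w \<rho>}) \<subseteq> span (v ` {g\<in>Gr scale v E w. w g < w \<tau>})"
      by (rule span_mono) (use \<rho> in auto)
    finally show "y \<in> span (v ` {g\<in>Gr scale v E w. w g < w \<tau>})" using \<rho> by simp
  qed
  then have "span (v ` {\<rho>\<in>E. w \<rho> < w \<tau>}) \<subseteq> span (v ` {g\<in>Gr scale v E w. w g < w \<tau>})"
    by (rule span_minimal) simp
  with inl show ?thesis by auto
qed

lemma Gr_SA:
  assumes "finite E" "inj_on w E"
  shows "SA scale v E (Gr scale v E w)"
proof -
  have "span (v ` Gr scale v E w) = span (v ` E)"
    unfolding span_eq
  proof
    show "v ` Gr scale v E w \<subseteq> span (v ` E)" by (auto simp: Gr_def intro: span_base)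
    show "v ` E \<subseteq> span (v ` Gr scale v E w)"
    proof
      fix y assume "y \<in> v ` E"
      then obtain \<tau> where "\<tau> \<in> E" "y = v \<tau>" by auto
      then show "y \<in> span (v ` Gr scale v E w)"
        using Gr_span[OF assms(1), of \<tau> v w] span_mono[of "v ` {g \<in> Gr scale v E w. w g \<le> w \<tau>}" "v ` Gr scale v E w"]
        by auto
    qed
  qed
  then show ?thesis using Gr_indep[OF assms] by (auto simp: SA_def Gr_def)
qed


lemma exchange_SA:
  assumes "finite E" "SA scale v E S" "\<tau> \<in> E" "\<tau> \<notin> S" "v \<tau> = (\<Sum>x\<in>S. c x *s v x)"
    "\<rho> \<in> S" "c \<rho> \<noteq> 0"
  shows "SA scale v E (insert \<tau> (S - {\<rho>}))"
proof -
  have SE: "S \<subseteq> E" and ind: "indepF scale v S" and sp: "span (v ` S) = span (v ` E)"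
    using assms(2) by (auto simp: SA_def)
  have fS: "finite S" using SE assms(1) by (rule finite_subset)
  let ?S' = "insert \<tau> (S - {\<rho>})"
  have vt: "v \<tau> = c \<rho> *s v \<rho> + (\<Sum>x\<in>S-{\<rho>}. c x *s v x)" using assms fS by (simp add: sum.remove)
  have "v \<rho> \<in> span (v ` ?S')"
  proof -
    have "v \<rho> = (1 / c \<rho>) *s (v \<tau> - (\<Sum>x\<in>S-{\<rho>}. c x *s v x))" using vt assms(7) by simp
    also have "\<dots> \<in> span (v ` ?S')"
      by (intro span_scale span_diff span_base span_fam_sub) auto
    finally show ?thesis .
  qed
  then have "v ` S \<subseteq> span (v ` ?S')" by (auto intro: span_base)
  then have "span (v ` S) \<subseteq> span (v ` ?S')" by (simp add: span_minimal)
  moreover have "span (v ` ?S') \<subseteq> span (v ` E)" by (rule span_mono) (use SE assms(3) in auto)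
  ultimately have spS': "span (v ` ?S') = span (v ` E)" using sp by auto
  have indS': "indepF scale v ?S'"
    unfolding indepF_def
  proof (intro allI impI)
    fix d assume d0: "(\<Sum>x\<in>?S'. d x *s v x) = 0"
    have tn: "\<tau> \<notin> S - {\<rho>}" using assms by auto
    have d0': "d \<tau> *s v \<tau> + (\<Sum>x\<in>S-{\<rho>}. d x *s v x) = 0" using d0 tn fS by simp
    define e where "e = (\<lambda>x. if x = \<rho> then d \<tau> * c \<rho> else d \<tau> * c x + d x)"
    have "(\<Sum>x\<in>S. e x *s v x) = e \<rho> *s v \<rho> + (\<Sum>x\<in>S-{\<rho>}. e x *s v x)"
      using fS assms by (simp add: sum.remove)
    also have "(\<Sum>x\<in>S-{\<rho>}. e x *s v x) = (\<Sum>x\<in>S-{\<rho>}. d \<tau> *s (c x *s v x) + d x *s v x)"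
      by (rule sum.cong) (auto simp: e_def scale_left_distrib)
    also have "\<dots> = d \<tau> *s (\<Sum>x\<in>S-{\<rho>}. c x *s v x) + (\<Sum>x\<in>S-{\<rho>}. d x *s v x)"
      by (simp add: sum.distrib scale_sum_right)
    also have "e \<rho> *s v \<rho> = d \<tau> *s (c \<rho> *s v \<rho>)" by (simp add: e_def)
    finally have "(\<Sum>x\<in>S. e x *s v x) = d \<tau> *s v \<tau> + (\<Sum>x\<in>S-{\<rho>}. d x *s v x)"
      using vt by (simp add: scale_right_distrib add.assoc)
    with d0' have "(\<Sum>x\<in>S. e x *s v x) = 0" by simp
    with ind have e0: "\<forall>x\<in>S. e x = 0" unfolding indepF_def by blast
    then have "d \<tau> * c \<rho> = 0" using assms(6) by (auto simp: e_def)
    then have dt: "d \<tau> = 0" using assms(7) by simp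
    show "\<forall>x\<in>?S'. d x = 0"
    proof
      fix x assume "x \<in> ?S'"
      then show "d x = 0" using dt e0 by (auto simp: e_def split: if_splits)
    qed
  qed
  show ?thesis unfolding SA_def using SE assms(3) spS' indS' by auto
qed

lemma SA_min_eq_Gr:
  assumes "finite E" "inj_on w E" "SA scale v E S" "\<forall>S'. SA scale v E S' \<longrightarrow> sum w S \<le> sum w S'"
  shows "S = Gr scale v E w"
proof (rule ccontr)
  let ?G = "Gr scale v E w"
  assume ne: "S \<noteq> ?G"
  define D where "D = (S - ?G) \<union> (?G - S)"
  have SE: "S \<subseteq> E" and indS: "indepF scale v S" and sp: "span (v ` S) = span (v ` E)"
    using assms(3) by (auto simp: SA_def)
  have fS: "finite S" using SE assms(1) by (rule finite_subset)
  have GE: "?G \<subseteq> E" by (auto simp: Gr_def)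
  have fG: "finite ?G" using GE assms(1) by (rule finite_subset)
  have DE: "D \<subseteq> E" using SE GE by (auto simp: D_def)
  have fD: "finite D" using fS fG by (simp add: D_def)
  have Dne: "D \<noteq> {}" using ne by (auto simp: D_def)
  obtain \<tau> where \<tau>: "\<tau> \<in> D" "w \<tau> = Min (w ` D)"
  proof -
    have "Min (w ` D) \<in> w ` D" using fD Dne by simp
    then show ?thesis using that by auto
  qed
  have lt: "\<And>x. x \<in> D \<Longrightarrow> x \<noteq> \<tau> \<Longrightarrow> w \<tau> < w x"
  proof -
    fix x assume x: "x \<in> D" "x \<noteq> \<tau>"
    have "w \<tau> \<le> w x" using \<tau> x fD by simp
    moreover have "w x \<noteq> w \<tau>" using x \<tau>(1) DE assms(2) by (auto dest: inj_onD)
    ultimately show "w \<tau> < w x" by simp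
  qed
  show False
  proof (cases "\<tau> \<in> S")
    case True
    then have tG: "\<tau> \<notin> ?G" using \<tau> D_def by auto
    have "v \<tau> \<in> span (v ` {g\<in>?G. w g < w \<tau>})"
      using Gr_lower[OF assms(1) _ tG] True SE by auto
    also have "span (v ` {g\<in>?G. w g < w \<tau>}) \<subseteq> span (v ` (S - {\<tau>}))"
    proof (rule span_mono, rule image_mono, rule subsetI)
      fix g assume g: "g \<in> {g\<in>?G. w g < w \<tau>}"
      have "g \<in> S"
      proof (rule ccontr)
        assume "g \<notin> S"
        then have "g \<in> D" using g by (auto simp: D_def)
        then show False using lt[of g] g by auto
      qed
      then show "g \<in> S - {\<tau>}" using g by auto
    qed
    finally show False using indepF_not_span[OF fS indS True] by simp
  next
    case False
    then have tG: "\<tau> \<in> ?G" using \<tau> D_def by auto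
    have "v \<tau> \<in> span (v ` S)" using sp tG GE by (auto intro: span_base)
    then obtain c where c: "v \<tau> = (\<Sum>x\<in>S. c x *s v x)" using span_fam[OF fS] by blast
    have "\<exists>\<rho>\<in>S - ?G. c \<rho> \<noteq> 0"
    proof (rule ccontr)
      assume nex: "\<not> (\<exists>\<rho>\<in>S - ?G. c \<rho> \<noteq> 0)"
      have "v \<tau> = (\<Sum>x\<in>S \<inter> ?G. c x *s v x)" unfolding c
        by (rule sum.mono_neutral_right) (use fS nex in auto)
      also have "\<dots> \<in> span (v ` (?G - {\<tau>}))" by (rule span_fam_sub) (use False in auto)
      finally show False using indepF_not_span[OF fG Gr_indep[OF assms(1,2)] tG] by simp
    qed
    then obtain \<rho> where \<rho>: "\<rho> \<in> S" "\<rho> \<notin> ?G" "c \<rho> \<noteq> 0" by blast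
    have "\<rho> \<in> D" "\<rho> \<noteq> \<tau>" using \<rho> False by (auto simp: D_def)
    then have wlt: "w \<tau> < w \<rho>" using lt by blast
    have SA': "SA scale v E (insert \<tau> (S - {\<rho>}))"
      by (rule exchange_SA[OF assms(1,3) _ False c \<rho>(1,3)]) (use tG GE in auto)
    have "sum w (insert \<tau> (S - {\<rho>})) = w \<tau> + sum w (S - {\<rho>})" using fS False by simp
    moreover have "sum w S = w \<rho> + sum w (S - {\<rho>})" using fS \<rho>(1) by (simp add: sum.remove)
    ultimately have "sum w (insert \<tau> (S - {\<rho>})) < sum w S" using wlt by simp
    moreover have "sum w S \<le> sum w (insert \<tau> (S - {\<rho>}))" using assms(4) SA' by blast
    ultimately show False by simp
  qed
qed

lemma min_SA_iff_Gr:
  assumes "finite E" "inj_on w E"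
  shows "(SA scale v E S \<and> (\<forall>S'. SA scale v E S' \<longrightarrow> sum w S \<le> sum w S')) \<longleftrightarrow> S = Gr scale v E w"
proof -
  let ?A = "{S. SA scale v E S}"
  have "?A \<subseteq> Pow E" by (auto simp: SA_def)
  then have fA: "finite ?A" using assms(1) by (meson finite_Pow_iff finite_subset)
  have Ane: "Gr scale v E w \<in> ?A" using Gr_SA[OF assms] by simp
  have "Min (sum w ` ?A) \<in> sum w ` ?A" using fA Ane by (intro Min_in) auto
  then obtain S0 where S0: "SA scale v E S0" "sum w S0 = Min (sum w ` ?A)" by auto
  have S0min: "\<forall>S'. SA scale v E S' \<longrightarrow> sum w S0 \<le> sum w S'"
  proof (intro allI impI)
    fix S' assume "SA scale v E S'"
    then have "sum w S' \<in> sum w ` ?A" by simp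
    then show "sum w S0 \<le> sum w S'" unfolding S0(2) using fA by (intro Min_le) auto
  qed
  have S0G: "S0 = Gr scale v E w" using SA_min_eq_Gr[OF assms S0(1) S0min] .
  show ?thesis
  proof
    assume "SA scale v E S \<and> (\<forall>S'. SA scale v E S' \<longrightarrow> sum w S \<le> sum w S')"
    then show "S = Gr scale v E w" using SA_min_eq_Gr[OF assms] by blast
  next
    assume "S = Gr scale v E w"
    then show "SA scale v E S \<and> (\<forall>S'. SA scale v E S' \<longrightarrow> sum w S \<le> sum w S')"
      using S0 S0min S0G by simp
  qed
qed


lemma lowerE'_sub: "{\<rho>\<in>insert \<sigma> E. w \<rho> < w \<tau>} \<subseteq> insert \<sigma> {\<rho>\<in>E. w \<rho> < w \<tau>}"
  by auto

lemma GG_diff1: "Gr scale v (insert \<sigma> E) w - Gr scale v E w \<subseteq> {\<sigma>}"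
proof
  fix \<tau> assume t: "\<tau> \<in> Gr scale v (insert \<sigma> E) w - Gr scale v E w"
  show "\<tau> \<in> {\<sigma>}"
  proof (rule ccontr)
    assume "\<tau> \<notin> {\<sigma>}"
    then have "\<tau> \<in> E" using t by (auto simp: Gr_def)
    have "span (v ` {\<rho>\<in>E. w \<rho> < w \<tau>}) \<subseteq> span (v ` {\<rho>\<in>insert \<sigma> E. w \<rho> < w \<tau>})"
      by (rule span_mono) auto
    then show False using t \<open>\<tau> \<in> E\<close> by (auto simp: Gr_def)
  qed
qed

lemma GG_P:
  assumes "\<tau> \<in> Gr scale v E w" "\<tau> \<notin> Gr scale v (insert \<sigma> E) w"
  shows "w \<sigma> < w \<tau>" "v \<sigma> \<notin> span (v ` {\<rho>\<in>E. w \<rho> < w \<tau>})"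
    "v \<sigma> \<in> span (v ` insert \<tau> {\<rho>\<in>E. w \<rho> < w \<tau>})"
proof -
  have tE: "\<tau> \<in> E" and nG: "v \<tau> \<notin> span (v ` {\<rho>\<in>E. w \<rho> < w \<tau>})" using assms(1) by (auto simp: Gr_def)
  have inG': "v \<tau> \<in> span (v ` {\<rho>\<in>insert \<sigma> E. w \<rho> < w \<tau>})" using assms(2) tE by (auto simp: Gr_def)
  show lt: "w \<sigma> < w \<tau>"
  proof (rule ccontr)
    assume "\<not> w \<sigma> < w \<tau>"
    then have "{\<rho>\<in>insert \<sigma> E. w \<rho> < w \<tau>} = {\<rho>\<in>E. w \<rho> < w \<tau>}" by auto
    then show False using nG inG' by simp
  qed
  have "span (v ` {\<rho>\<in>insert \<sigma> E. w \<rho> < w \<tau>}) \<subseteq> span (insert (v \<sigma>) (v ` {\<rho>\<in>E. w \<rho> < w \<tau>}))"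
    by (rule span_mono) auto
  with inG' have in2: "v \<tau> \<in> span (insert (v \<sigma>) (v ` {\<rho>\<in>E. w \<rho> < w \<tau>}))" by blast
  show "v \<sigma> \<notin> span (v ` {\<rho>\<in>E. w \<rho> < w \<tau>})"
    using span_trans[OF _ in2] nG by blast
  have "v \<sigma> \<in> span (insert (v \<tau>) (v ` {\<rho>\<in>E. w \<rho> < w \<tau>}))"
    by (rule in_span_insert[OF in2 nG])
  then show "v \<sigma> \<in> span (v ` insert \<tau> {\<rho>\<in>E. w \<rho> < w \<tau>})" by simp
qed

lemma GG_card:
  assumes "finite E" "inj_on w (insert \<sigma> E)"
  shows "card (Gr scale v E w - Gr scale v (insert \<sigma> E) w) \<le> 1"
proof -
  let ?D = "Gr scale v E w - Gr scale v (insert \<sigma> E) w"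
  have fD: "finite ?D" using assms(1) by (auto simp: Gr_def)
  have key: "False" if t1: "t1 \<in> ?D" and t2: "t2 \<in> ?D" and lt: "w t1 < w t2" for t1 t2
  proof -
    have t1E: "t1 \<in> E" using t1 by (auto simp: Gr_def)
    have "v \<sigma> \<in> span (v ` insert t1 {\<rho>\<in>E. w \<rho> < w t1})" by (rule GG_P(3)) (use t1 in auto)
    also have "span (v ` insert t1 {\<rho>\<in>E. w \<rho> < w t1}) \<subseteq> span (v ` {\<rho>\<in>E. w \<rho> < w t2})"
      by (rule span_mono) (use t1E lt in auto)
    moreover have "v \<sigma> \<notin> span (v ` {\<rho>\<in>E. w \<rho> < w t2})" by (rule GG_P(2)) (use t2 in auto)
    ultimately show False by blast
  qed
  have "\<forall>a\<in>?D. \<forall>b\<in>?D. a = b"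
  proof (intro ballI)
    fix a b assume a: "a \<in> ?D" and b: "b \<in> ?D"
    show "a = b"
    proof (rule ccontr)
      assume "a \<noteq> b"
      moreover have "a \<in> insert \<sigma> E" "b \<in> insert \<sigma> E" using a b by (auto simp: Gr_def)
      ultimately have "w a \<noteq> w b" using assms(2) by (meson inj_onD)
      then show False using key[OF a b] key[OF b a] by linarith
    qed
  qed
  then show ?thesis unfolding One_nat_def using card_le_Suc0_iff_eq[OF fD] by blast
qed

lemma GG_eq:
  assumes "\<sigma> \<notin> Gr scale v (insert \<sigma> E) w"
  shows "Gr scale v E w = Gr scale v (insert \<sigma> E) w"
proof
  show "Gr scale v (insert \<sigma> E) w \<subseteq> Gr scale v E w"
  proof
    fix \<tau> assume t: "\<tau> \<in> Gr scale v (insert \<sigma> E) w"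
    have d: "Gr scale v (insert \<sigma> E) w - Gr scale v E w \<subseteq> {\<sigma>}"
      by (rule GG_diff1[where \<sigma>=\<sigma> and E=E and w=w and v=v])
    have "\<tau> \<noteq> \<sigma>" using t assms by auto
    then show "\<tau> \<in> Gr scale v E w" using d t by blast
  qed
  show "Gr scale v E w \<subseteq> Gr scale v (insert \<sigma> E) w"
  proof
    fix \<tau> assume t: "\<tau> \<in> Gr scale v E w"
    show "\<tau> \<in> Gr scale v (insert \<sigma> E) w"
    proof (rule ccontr)
      assume nt: "\<tau> \<notin> Gr scale v (insert \<sigma> E) w"
      have lt: "w \<sigma> < w \<tau>" using GG_P(1)[OF t nt] .
      have "v \<sigma> \<in> span (v ` {\<rho>\<in>insert \<sigma> E. w \<rho> < w \<sigma>})" using assms by (auto simp: Gr_def)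
      also have "span (v ` {\<rho>\<in>insert \<sigma> E. w \<rho> < w \<sigma>}) \<subseteq> span (v ` {\<rho>\<in>E. w \<rho> < w \<tau>})"
        by (rule span_mono) (use lt in auto)
      finally show False using GG_P(2)[OF t nt] by blast
    qed
  qed
qed


lemma dim_eq_span_eq:
  assumes "finite T" "S \<subseteq> T" "dim S = dim T"
  shows "span S = span T"
proof (rule ccontr)
  assume ne: "span S \<noteq> span T"
  obtain B where B: "B \<subseteq> S" "independent B" "S \<subseteq> span B" "card B = dim S" by (rule basis_exists)
  obtain C where C: "C \<subseteq> T" "independent C" "T \<subseteq> span C" "card C = dim T" by (rule basis_exists)
  have fC: "finite C" using C(1) assms(1) finite_subset by blast
  have spB: "span B = span S" unfolding span_eq using B(1,3) span_superset by blast
  have "\<not> T \<subseteq> span S"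
  proof
    assume "T \<subseteq> span S"
    then have "span T \<subseteq> span S" by (simp add: span_minimal)
    moreover have "span S \<subseteq> span T" using assms(2) by (rule span_mono)
    ultimately show False using ne by blast
  qed
  then obtain x where x: "x \<in> T" "x \<notin> span B" using spB by auto
  have ind: "independent (insert x B)" using independent_insertI[OF x(2) B(2)] .
  have sub: "insert x B \<subseteq> span C" using x(1) C(3) B(1) assms(2) by blast
  from independent_span_bound[OF fC ind sub] have fin: "finite (insert x B)" and le: "card (insert x B) \<le> card C"
    by auto
  have "x \<notin> B" using x(2) span_superset by blast
  then have "card (insert x B) = card B + 1" using fin by simp
  then show False using le B(4) C(4) assms(3) by simp
qed

lemma dim0_sub0:
  assumes "finite W" "X \<subseteq> span W" "dim X = 0"
  shows "X \<subseteq> {0}"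
proof -
  obtain B where B: "B \<subseteq> X" "independent B" "X \<subseteq> span B" "card B = dim X" by (rule basis_exists)
  have "B \<subseteq> span W" using B(1) assms(2) by blast
  then have "finite B" using independent_span_bound[OF assms(1) B(2)] by auto
  then have "B = {}" using B(4) assms(3) by simp
  then show ?thesis using B(3) by simp
qed

lemma dim_sub0:
  assumes "X \<subseteq> {0}"
  shows "dim X = 0"
  using dim_le_card[of X "{}"] assms by simp

end

lemma vs_scl: "vector_space (scl :: 'f::field \<Rightarrow> ('b set \<Rightarrow> 'f) \<Rightarrow> ('b set \<Rightarrow> 'f))"
  by unfold_locales (auto simp: scl_def fun_eq_iff algebra_simps)

interpretation V: vector_space "scl :: 'f::field \<Rightarrow> ('b set \<Rightarrow> 'f) \<Rightarrow> ('b set \<Rightarrow> 'f)"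
  by (rule vs_scl)

lemma sum_fun_apply: "(sum f A) x = (\<Sum>a\<in>A. f a x)"
  by (induction A rule: infinite_finite_induct) auto

lemma bd_chain_eq: "bd_chain j L c = (\<Sum>\<tau>\<in>faces j L. scl (c \<tau>) (bd \<tau>))"
  by (rule ext) (simp add: bd_chain_def sum_fun_apply scl_def)

lemma finite_faces: "finite L \<Longrightarrow> finite (faces j L)"
  by (simp add: faces_def)

lemma chains_cong: "faces j A = faces j B \<Longrightarrow> chains j A = chains j B"
  by (simp add: chains_def)

lemma bd_chain_cong: "faces j A = faces j B \<Longrightarrow> bd_chain j A = bd_chain j B"
  by (simp add: bd_chain_def fun_eq_iff)

lemma image_bd_chain:
  fixes L :: "'a::linorder set set"
  assumes "finite L"
  shows "(bd_chain j L ` chains j L :: ('a set \<Rightarrow> 'f::field) set) = V.span (bd ` faces j L)"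
proof
  show "(bd_chain j L ` chains j L :: ('a set \<Rightarrow> 'f::field) set) \<subseteq> V.span (bd ` faces j L)"
    by (auto simp: bd_chain_eq intro!: V.span_fam_sub)
  show "V.span (bd ` faces j L) \<subseteq> (bd_chain j L ` chains j L :: ('a set \<Rightarrow> 'f::field) set)"
  proof
    fix x :: "'a set \<Rightarrow> 'f" assume "x \<in> V.span (bd ` faces j L)"
    then obtain c where c: "x = (\<Sum>\<tau>\<in>faces j L. scl (c \<tau>) (bd \<tau>))"
      using V.span_fam[OF finite_faces[OF assms]] by blast
    define c' where "c' = (\<lambda>\<tau>. if \<tau> \<in> faces j L then c \<tau> else 0)"
    have "c' \<in> chains j L" by (simp add: chains_def c'_def)
    moreover have "bd_chain j L c' = x" unfolding c bd_chain_eq by (rule sum.cong) (auto simp: c'_def)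
    ultimately show "x \<in> bd_chain j L ` chains j L" by blast
  qed
qed

lemma chains_span:
  fixes L :: "'a::linorder set set"
  assumes "finite L"
  shows "(chains j L :: ('a set \<Rightarrow> 'f::field) set)
     \<subseteq> V.span ((\<lambda>\<tau>. \<lambda>x. if x = \<tau> then 1 else 0) ` faces j L)"
proof
  fix c :: "'a set \<Rightarrow> 'f" assume c: "c \<in> chains j L"
  have "c = (\<Sum>\<tau>\<in>faces j L. scl (c \<tau>) (\<lambda>x. if x = \<tau> then 1 else 0))"
  proof (rule ext)
    fix x
    have "(\<Sum>\<tau>\<in>faces j L. scl (c \<tau>) (\<lambda>x. if x = \<tau> then 1 else 0)) x
        = (\<Sum>\<tau>\<in>faces j L. if x = \<tau> then c x else 0)"
      unfolding sum_fun_apply by (rule sum.cong) (auto simp: scl_def)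
    also have "\<dots> = c x" using c finite_faces[OF assms] by (auto simp: chains_def)
    finally show "c x = (\<Sum>\<tau>\<in>faces j L. scl (c \<tau>) (\<lambda>x. if x = \<tau> then 1 else 0)) x" by simp
  qed
  then show "c \<in> V.span ((\<lambda>\<tau>. \<lambda>x. if x = \<tau> then 1 else 0) ` faces j L)"
    using V.span_fam[OF finite_faces[OF assms]] by blast
qed


lemma spanning_acycle_iff:
  fixes L :: "'a::linorder set set" and F :: "'f::field itself"
  assumes "finite L"
  shows "spanning_acycle F k L S \<longleftrightarrow>
    SA (scl :: 'f \<Rightarrow> _) (bd :: 'a set \<Rightarrow> 'a set \<Rightarrow> 'f) {\<tau>\<in>L. card \<tau> = k+1} S"
proof (cases "S \<subseteq> {\<tau>\<in>L. card \<tau> = k+1}")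
  case False then show ?thesis by (simp add: spanning_acycle_def SA_def)
next
  case True
  let ?E = "{\<tau>\<in>L. card \<tau> = k+1}"
  let ?bd = "bd :: 'a set \<Rightarrow> 'a set \<Rightarrow> 'f"
  define L' where "L' = skeleton (int k - 1) L \<union> S"
  have fE: "finite ?E" using assms by simp
  have fS: "finite S" using True fE finite_subset by blast
  have fL': "finite L'" using assms fS by (simp add: L'_def skeleton_def)
  have f1: "faces (int k - 1) L' = faces (int k - 1) L" using True by (auto simp: faces_def L'_def skeleton_def)
  have f2: "faces (int k) L' = S" using True by (auto simp: faces_def L'_def skeleton_def)
  have f3: "faces (int k + 1) L' = {}" using True by (auto simp: faces_def L'_def skeleton_def)
  have f4: "faces (int k) L = ?E" by (auto simp: faces_def)
  have kk: "int k - 1 + 1 = int k" by simp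
  have b1: "betti F (int k - 1) L' = betti F (int k - 1) L \<longleftrightarrow> V.dim (?bd ` S) = V.dim (?bd ` ?E)"
    unfolding betti_def kk chains_cong[OF f1] bd_chain_cong[OF f1] image_bd_chain[OF fL'] image_bd_chain[OF assms]
      f2 f4 V.dim_span by simp
  have d0: "V.dim (V.span (?bd ` {})) = 0"
    by (rule V.dim_sub0) simp
  let ?K = "{c \<in> chains (int k) L'. bd_chain (int k) L' c = (0 :: 'a set \<Rightarrow> 'f)}"
  have b2: "betti F (int k) L' = 0 \<longleftrightarrow> V.dim ?K = 0"
    unfolding betti_def image_bd_chain[OF fL'] f3 d0 by simp
  have Kchar: "c \<in> ?K \<longleftrightarrow> (\<forall>\<tau>. \<tau> \<notin> S \<longrightarrow> c \<tau> = 0) \<and> (\<Sum>\<tau>\<in>S. scl (c \<tau>) (?bd \<tau>)) = 0" for c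
    by (simp add: chains_def bd_chain_eq f2)
  have b3: "V.dim ?K = 0 \<longleftrightarrow> indepF (scl :: 'f \<Rightarrow> _) ?bd S"
  proof
    assume "V.dim ?K = 0"
    moreover have "?K \<subseteq> V.span ((\<lambda>\<tau>. \<lambda>x. if x = \<tau> then 1 else 0) ` faces (int k) L')"
      using chains_span[OF fL', of "int k"] by blast
    ultimately have K0: "?K \<subseteq> {0}"
      using V.dim0_sub0[OF finite_imageI[OF finite_faces[OF fL']]] by blast
    show "indepF (scl :: 'f \<Rightarrow> _) ?bd S"
      unfolding indepF_def
    proof (intro allI impI ballI)
      fix d :: "'a set \<Rightarrow> 'f" and \<tau> assume d: "(\<Sum>\<tau>\<in>S. scl (d \<tau>) (?bd \<tau>)) = 0" and t: "\<tau> \<in> S"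
      define c where "c = (\<lambda>\<tau>. if \<tau> \<in> S then d \<tau> else 0)"
      have "(\<Sum>\<tau>\<in>S. scl (c \<tau>) (?bd \<tau>)) = (\<Sum>\<tau>\<in>S. scl (d \<tau>) (?bd \<tau>))"
        by (rule sum.cong) (auto simp: c_def)
      then have "c \<in> ?K" unfolding Kchar using d by (auto simp: c_def)
      then have "c = 0" using K0 by blast
      then show "d \<tau> = 0" using t by (metis c_def zero_fun_apply)
    qed
  next
    assume ind: "indepF (scl :: 'f \<Rightarrow> _) ?bd S"
    have "?K \<subseteq> {0}"
    proof
      fix c assume "c \<in> ?K"
      then have c1: "\<forall>\<tau>. \<tau> \<notin> S \<longrightarrow> c \<tau> = 0" and c2: "(\<Sum>\<tau>\<in>S. scl (c \<tau>) (?bd \<tau>)) = 0"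
        unfolding Kchar by auto
      have "\<forall>\<tau>\<in>S. c \<tau> = 0" using ind c2 unfolding indepF_def by blast
      with c1 have "c = 0" by (auto simp: fun_eq_iff)
      then show "c \<in> {0}" by simp
    qed
    then show "V.dim ?K = 0" by (rule V.dim_sub0)
  qed
  have b4: "V.dim (?bd ` S) = V.dim (?bd ` ?E) \<longleftrightarrow> V.span (?bd ` S) = V.span (?bd ` ?E)"
    using V.dim_eq_span_eq[OF finite_imageI[OF fE] image_mono[OF True]] V.span_eq_dim by blast
  show ?thesis
    unfolding spanning_acycle_def SA_def L'_def[symmetric] b1 b2 b3 b4 using True by blast
qed

lemma MSA_eq:
  fixes L :: "'a::linorder set set" and F :: "'f::field itself"
  assumes "finite L" "inj_on w {\<tau>\<in>L. card \<tau> = k+1}"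
  shows "MSA F k L w = Gr (scl :: 'f \<Rightarrow> _) (bd :: 'a set \<Rightarrow> 'a set \<Rightarrow> 'f) {\<tau>\<in>L. card \<tau> = k+1} w"
proof -
  have fE: "finite {\<tau>\<in>L. card \<tau> = k+1}" using assms(1) by simp
  have "min_spanning_acycle F k L w S \<longleftrightarrow>
      S = Gr (scl :: 'f \<Rightarrow> _) (bd :: 'a set \<Rightarrow> 'a set \<Rightarrow> 'f) {\<tau>\<in>L. card \<tau> = k+1} w" for S
    unfolding min_spanning_acycle_def spanning_acycle_iff[OF assms(1), where F=F]
    by (rule V.min_SA_iff_Gr[OF fE assms(2)])
  then have "min_spanning_acycle F k L w =
      (\<lambda>S. S = Gr (scl :: 'f \<Rightarrow> _) (bd :: 'a set \<Rightarrow> 'a set \<Rightarrow> 'f) {\<tau>\<in>L. card \<tau> = k+1} w)"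
    by (intro ext) simp
  then show ?thesis unfolding MSA_def by simp
qed

lemma label_k:
  fixes L :: "'a::linorder set set" and F :: "'f::field itself"
  assumes "finite L" "card \<tau> = k+1"
  shows "label F L w \<tau> = (if (bd \<tau> :: 'a set \<Rightarrow> 'f)
            \<in> V.span (bd ` {\<rho>\<in>{\<rho>\<in>L. card \<rho> = k+1}. w \<rho> < w \<tau>}) then 1 else -1)"
proof -
  have j: "int (card \<tau>) - 1 = int k" using assms(2) by simp
  have fc: "faces (int k) {\<rho>\<in>L. w \<rho> < w \<tau>} = {\<rho>\<in>{\<rho>\<in>L. card \<rho> = k+1}. w \<rho> < w \<tau>}"
    by (auto simp: faces_def)
  have fin: "finite {\<rho>\<in>L. w \<rho> < w \<tau>}" using assms(1) by simp
  show ?thesis unfolding label_def Let_def j image_bd_chain[OF fin] fc ..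
qed

lemma label_other:
  assumes "card \<tau> \<noteq> card \<sigma>"
  shows "label F (insert \<sigma> K) w \<tau> = label F K w \<tau>"
proof -
  have fe: "faces (int (card \<tau>) - 1) {\<rho>\<in>insert \<sigma> K. w \<rho> < w \<tau>} = faces (int (card \<tau>) - 1) {\<rho>\<in>K. w \<rho> < w \<tau>}"
    using assms by (auto simp: faces_def)
  show ?thesis unfolding label_def Let_def chains_cong[OF fe] bd_chain_cong[OF fe] ..
qed

theorem lemma3p2:
  fixes K :: "'a::linorder set set" and w :: "'a set \<Rightarrow> real"
    and \<sigma> :: "'a set" and k :: nat and F :: "'f::field itself"
  assumes "weighted_complex K w"
    and "weighted_complex (insert \<sigma> K) w"
    and "\<sigma> \<notin> K"
    and "card \<sigma> = k + 1"
    and "inj_on w {\<tau> \<in> insert \<sigma> K. card \<tau> = k + 1}"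
  shows "card (MSA F k (insert \<sigma> K) w - MSA F k K w) \<le> 1
       \<and> card (MSA F k K w - MSA F k (insert \<sigma> K) w) \<le> 1
       \<and> card {\<tau> \<in> K. label F K w \<tau> \<noteq> label F (insert \<sigma> K) w \<tau>} \<le> 1
       \<and> (label F (insert \<sigma> K) w \<sigma> = 1 \<longrightarrow>
            MSA F k K w = MSA F k (insert \<sigma> K) w \<and>
            (\<forall>\<phi>. strict_mono_on {0..} \<phi> \<and> (\<forall>x\<ge>0. \<phi> x \<ge> 0) \<longrightarrow>
                 Mphi F \<phi> k K w = Mphi F \<phi> k (insert \<sigma> K) w))"
proof -
  have fK: "finite K" using assms(1) by (simp add: weighted_complex_def)
  have fKs: "finite (insert \<sigma> K)" using fK by simp
  let ?E = "{\<tau>\<in>K. card \<tau> = k+1}"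
  have EE: "{\<tau>\<in>insert \<sigma> K. card \<tau> = k+1} = insert \<sigma> ?E" using assms(4) by auto
  have injE': "inj_on w (insert \<sigma> ?E)" using assms(5) EE by simp
  have injE: "inj_on w ?E" using assms(5) by (rule inj_on_subset) auto
  have fE: "finite ?E" using fK by simp
  let ?G = "Gr (scl :: 'f \<Rightarrow> _) (bd :: 'a set \<Rightarrow> 'a set \<Rightarrow> 'f) ?E w"
  let ?G' = "Gr (scl :: 'f \<Rightarrow> _) (bd :: 'a set \<Rightarrow> 'a set \<Rightarrow> 'f) (insert \<sigma> ?E) w"
  have M1: "MSA F k K w = ?G" by (rule MSA_eq[OF fK injE])
  have M2: "MSA F k (insert \<sigma> K) w = ?G'" using MSA_eq[OF fKs assms(5), where F=F] EE by simp
  have d1: "?G' - ?G \<subseteq> {\<sigma>}" by (rule V.GG_diff1)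
  have c1: "card (?G' - ?G) \<le> 1" using card_mono[OF _ d1] by simp
  have c2: "card (?G - ?G') \<le> 1" by (rule V.GG_card[OF fE injE'])
  have lab: "{\<tau>\<in>K. label F K w \<tau> \<noteq> label F (insert \<sigma> K) w \<tau>} \<subseteq> ?G - ?G'"
  proof
    fix \<tau> assume t: "\<tau> \<in> {\<tau>\<in>K. label F K w \<tau> \<noteq> label F (insert \<sigma> K) w \<tau>}"
    then have tK: "\<tau> \<in> K" and ne: "label F K w \<tau> \<noteq> label F (insert \<sigma> K) w \<tau>" by auto
    have ck: "card \<tau> = k+1"
    proof (rule ccontr)
      assume "card \<tau> \<noteq> k+1"
      then have "card \<tau> \<noteq> card \<sigma>" using assms(4) by simp
      then show False using ne label_other[of \<tau> \<sigma> F K w] by simp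
    qed
    have tE: "\<tau> \<in> ?E" using tK ck by simp
    have l1: "label F K w \<tau> = (if (bd \<tau> :: 'a set \<Rightarrow> 'f) \<in> V.span (bd ` {\<rho>\<in>?E. w \<rho> < w \<tau>}) then 1 else -1)"
      by (rule label_k[OF fK ck])
    have l2: "label F (insert \<sigma> K) w \<tau> = (if (bd \<tau> :: 'a set \<Rightarrow> 'f) \<in> V.span (bd ` {\<rho>\<in>insert \<sigma> ?E. w \<rho> < w \<tau>}) then 1 else -1)"
      using label_k[OF fKs ck, where F=F and w=w] by (simp only: EE)
    have "\<tau> \<noteq> \<sigma>" using tK assms(3) by auto
    then have "\<tau> \<notin> ?G' - ?G" using d1 by blast
    then show "\<tau> \<in> ?G - ?G'" using ne l1 l2 tE by (auto simp: Gr_def split: if_splits)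
  qed
  have fD: "finite (?G - ?G')" by (rule finite_Diff, rule finite_subset[OF _ fE]) (auto simp: Gr_def)
  have c3: "card {\<tau>\<in>K. label F K w \<tau> \<noteq> label F (insert \<sigma> K) w \<tau>} \<le> 1"
    using card_mono[OF fD lab] c2 by simp
  have c4: "label F (insert \<sigma> K) w \<sigma> = 1 \<longrightarrow> ?G = ?G'"
  proof
    assume l: "label F (insert \<sigma> K) w \<sigma> = 1"
    have "label F (insert \<sigma> K) w \<sigma> = (if (bd \<sigma> :: 'a set \<Rightarrow> 'f) \<in> V.span (bd ` {\<rho>\<in>insert \<sigma> ?E. w \<rho> < w \<sigma>}) then 1 else -1)"
      using label_k[OF fKs assms(4), where F=F and w=w] by (simp only: EE)
    with l have "(bd \<sigma> :: 'a set \<Rightarrow> 'f) \<in> V.span (bd ` {\<rho>\<in>insert \<sigma> ?E. w \<rho> < w \<sigma>})"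
      by (simp split: if_splits)
    then have "\<sigma> \<notin> ?G'" by (simp add: Gr_def)
    then show "?G = ?G'" by (rule V.GG_eq)
  qed
  show ?thesis using c1 c2 c3 c4 unfolding Mphi_def M1 M2 by simp
qed

end
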